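(* Fix $\alpha\in[0,1)$. Let $M=(r,q,u)$ and $\tilde M=(\tilde r,\tilde q,\tilde u)$ be floor-randomized, left-continuous mechanisms satisfying DD, and suppose $\tilde M$ dominates $M$. Let $D=\{\theta\in\Theta:\tilde q(\theta)\tilde r(\theta)>q(\theta)r(\theta)\}$. Then $u(\theta)>\tilde u(\theta)$ for every $\theta\in D$.
   Context: Setting. Let $\Theta=[\underline\theta,\overline\theta]$ with $0<\underline\theta<\overline\theta$. Let $c>0$ and let $P:\mathbb R_+\to\mathbb R_+$ be continuous and strictly decreasing with $P(\overline q)=0$ for some $\overline q>0$. Put $V(q)=\int_0^q P(z)\,dz$ and $\mathrm{TS}(\theta,q)=V(q)-c-\theta q$ for $q>0$, $\mathrm{TS}(\theta,0)=0$. Assume (A2): $\mathrm{TS}(\overline\theta,P^{-1}(\overline\theta))>0$. A mechanism is a triple $M=(r,q,u)$ of functions $r:\Theta\to[0,1]$, $q:\Theta\to[0,\overline q]$, $u:\Theta\to\mathbb R$ with $q(\theta)=0$ if and only if $r(\theta)=0$. It is IC if $u(\theta)\ge u(\theta')+(\theta'-\theta)q(\theta')r(\theta')$ for all $\theta,\theta'\in\Theta$, and IR if $u(\theta)\ge 0$ for all $\theta$. (Known fact: $M$ is IC iff $\theta\mapsto q(\theta)r(\theta)$ is nonincreasing and $u(\theta)=u(\overline\theta)+\int_\theta^{\overline\theta}q(z)r(z)\,dz$ for all $\theta$; an IC mechanism is IR iff $u(\overline\theta)\ge0$.) The regulator's surplus at $\theta$ is $\mathrm{RS}_\alpha(\theta,M)=r(\theta)\,\mathrm{TS}(\theta,q(\theta))-(1-\alpha)u(\theta)$.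 An IC and IR mechanism $\tilde M$ dominates an IC and IR mechanism $M$ if $\mathrm{RS}_\alpha(\theta,\tilde M)\ge \mathrm{RS}_\alpha(\theta,M)$ for all $\theta\in\Theta$ with strict inequality for some $\theta$. The quantity floor $\hat q$ is the unique $q>0$ with $V(q)-qP(q)=c$. A mechanism $(r,q,u)$ is floor-randomized if it is IC, IR, $u(\overline\theta)=0$, and $\Theta$ can be partitioned into three pairwise disjoint (possibly empty) intervals $\Theta_1,\Theta_{01},\Theta_0$, with every element of $\Theta_0$ larger than every element of $\Theta_{01}$ and every element of $\Theta_{01}$ larger than every element of $\Theta_1$, such that: $q(\theta)\ge\hat q$ and $r(\theta)=1$ for $\theta\in\Theta_1$; $q(\theta)=\hat q$ and $r(\theta)\in(0,1)$ for $\theta\in\Theta_{01}$; $q(\theta)=r(\theta)=0$ for $\theta\in\Theta_0$. The efficient quantity is $q_e(\theta)=P^{-1}(\theta)$. A mechanism satisfies downward distortion (DD) if $q(\theta)\le q_e(\theta)$ for all $\theta$, with equality at $\theta=\underline\theta$. A mechanism is left continuous if $\theta\mapsto q(\theta)r(\theta)$ is left continuous at every $\theta\in(\underline\theta,\overline\theta]$. *)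

theory Defs
  imports "HOL-Analysis.Analysis"
begin

definition V :: "(real \<Rightarrow> real) \<Rightarrow> real \<Rightarrow> real" where
  "V P q = integral {0..q} P"

definition TS :: "(real \<Rightarrow> real) \<Rightarrow> real \<Rightarrow> real \<Rightarrow> real \<Rightarrow> real" where
  "TS P c \<theta> q = (if q = 0 then 0 else V P q - c - \<theta> * q)"

definition qhat :: "(real \<Rightarrow> real) \<Rightarrow> real \<Rightarrow> real" where
  "qhat P c = (THE q. q > 0 \<and> V P q - q * P q = c)"

definition qe :: "(real \<Rightarrow> real) \<Rightarrow> real \<Rightarrow> real" where
  "qe P \<theta> = (THE z. z \<ge> 0 \<and> P z = \<theta>)"

definition mechanism ::
  "real \<Rightarrow> real \<Rightarrow> real \<Rightarrow> (real \<Rightarrow> real) \<Rightarrow> (real \<Rightarrow> real) \<Rightarrow> (real \<Rightarrow> real) \<Rightarrow> bool" where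
  "mechanism tlo thi qbar r q u \<longleftrightarrow>
     (\<forall>\<theta>\<in>{tlo..thi}. 0 \<le> r \<theta> \<and> r \<theta> \<le> 1 \<and> 0 \<le> q \<theta> \<and> q \<theta> \<le> qbar
                    \<and> (q \<theta> = 0 \<longleftrightarrow> r \<theta> = 0))"

definition IC :: "real \<Rightarrow> real \<Rightarrow> (real \<Rightarrow> real) \<Rightarrow> (real \<Rightarrow> real) \<Rightarrow> (real \<Rightarrow> real) \<Rightarrow> bool" where
  "IC tlo thi r q u \<longleftrightarrow>
     (\<forall>\<theta>\<in>{tlo..thi}. \<forall>\<theta>'\<in>{tlo..thi}. u \<theta> \<ge> u \<theta>' + (\<theta>' - \<theta>) * q \<theta>' * r \<theta>')"

definition IR :: "real \<Rightarrow> real \<Rightarrow> (real \<Rightarrow> real) \<Rightarrow> bool" where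
  "IR tlo thi u \<longleftrightarrow> (\<forall>\<theta>\<in>{tlo..thi}. u \<theta> \<ge> 0)"

definition RS ::
  "(real \<Rightarrow> real) \<Rightarrow> real \<Rightarrow> real \<Rightarrow> real \<Rightarrow> (real \<Rightarrow> real) \<Rightarrow> (real \<Rightarrow> real) \<Rightarrow> (real \<Rightarrow> real) \<Rightarrow> real" where
  "RS P c \<alpha> \<theta> r q u = r \<theta> * TS P c \<theta> (q \<theta>) - (1 - \<alpha>) * u \<theta>"

definition dominates ::
  "(real \<Rightarrow> real) \<Rightarrow> real \<Rightarrow> real \<Rightarrow> real \<Rightarrow> real \<Rightarrow> real \<Rightarrow>
   (real \<Rightarrow> real) \<Rightarrow> (real \<Rightarrow> real) \<Rightarrow> (real \<Rightarrow> real) \<Rightarrow>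
   (real \<Rightarrow> real) \<Rightarrow> (real \<Rightarrow> real) \<Rightarrow> (real \<Rightarrow> real) \<Rightarrow> bool" where
  "dominates P c \<alpha> tlo thi qbar rt qt ut r q u \<longleftrightarrow>
     mechanism tlo thi qbar rt qt ut \<and> IC tlo thi rt qt ut \<and> IR tlo thi ut \<and>
     mechanism tlo thi qbar r q u \<and> IC tlo thi r q u \<and> IR tlo thi u \<and>
     (\<forall>\<theta>\<in>{tlo..thi}. RS P c \<alpha> \<theta> rt qt ut \<ge> RS P c \<alpha> \<theta> r q u) \<and>
     (\<exists>\<theta>\<in>{tlo..thi}. RS P c \<alpha> \<theta> rt qt ut > RS P c \<alpha> \<theta> r q u)"

definition floor_randomized ::
  "(real \<Rightarrow> real) \<Rightarrow> real \<Rightarrow> real \<Rightarrow> real \<Rightarrow> real \<Rightarrow>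
   (real \<Rightarrow> real) \<Rightarrow> (real \<Rightarrow> real) \<Rightarrow> (real \<Rightarrow> real) \<Rightarrow> bool" where
  "floor_randomized P c tlo thi qbar r q u \<longleftrightarrow>
     mechanism tlo thi qbar r q u \<and> IC tlo thi r q u \<and> IR tlo thi u \<and> u thi = 0 \<and>
     (\<exists>T1 T01 T0 :: real set.
        is_interval T1 \<and> is_interval T01 \<and> is_interval T0 \<and>
        T1 \<union> T01 \<union> T0 = {tlo..thi} \<and>
        T1 \<inter> T01 = {} \<and> T1 \<inter> T0 = {} \<and> T01 \<inter> T0 = {} \<and>
        (\<forall>x\<in>T0. \<forall>y\<in>T01. x > y) \<and> (\<forall>x\<in>T01. \<forall>y\<in>T1. x > y) \<and> (\<forall>x\<in>T0. \<forall>y\<in>T1. x > y) \<and>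
        (\<forall>\<theta>\<in>T1. q \<theta> \<ge> qhat P c \<and> r \<theta> = 1) \<and>
        (\<forall>\<theta>\<in>T01. q \<theta> = qhat P c \<and> 0 < r \<theta> \<and> r \<theta> < 1) \<and>
        (\<forall>\<theta>\<in>T0. q \<theta> = 0 \<and> r \<theta> = 0))"

definition DD :: "(real \<Rightarrow> real) \<Rightarrow> real \<Rightarrow> real \<Rightarrow> (real \<Rightarrow> real) \<Rightarrow> bool" where
  "DD P tlo thi q \<longleftrightarrow> (\<forall>\<theta>\<in>{tlo..thi}. q \<theta> \<le> qe P \<theta>) \<and> q tlo = qe P tlo"

definition left_continuous :: "real \<Rightarrow> real \<Rightarrow> (real \<Rightarrow> real) \<Rightarrow> (real \<Rightarrow> real) \<Rightarrow> bool" where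
  "left_continuous tlo thi r q \<longleftrightarrow>
     (\<forall>\<theta>\<in>{tlo<..thi}. continuous (at_left \<theta>) (\<lambda>t. q t * r t))"

end

theory Submission
  imports Defs
begin

lemma int_lower:
  fixes P :: "real \<Rightarrow> real"
  assumes "a \<le> b" "continuous_on {a..b} P" "\<forall>z\<in>{a..b}. k \<le> P z"
  shows "k * (b - a) \<le> integral {a..b} P"
proof -
  have "integral {a..b} (\<lambda>_. k) \<le> integral {a..b} P"
    by (rule integral_le) (use assms integrable_continuous_real in auto)
  then show ?thesis using assms(1) by (simp add: mult.commute)
qed

lemma V_diff:
  fixes P :: "real \<Rightarrow> real"
  assumes "0 \<le> a" "a \<le> b" "continuous_on {0..} P"
  shows "V P b - V P a = integral {a..b} P"
proof -
  have I: "P integrable_on {0..b}"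
    using assms by (intro integrable_continuous_real) (auto intro: continuous_on_subset)
  have "integral {0..a} P + integral {a..b} P = integral {0..b} P"
    by (rule Henstock_Kurzweil_Integration.integral_combine[OF _ _ I]) (use assms in auto)
  then show ?thesis unfolding V_def by simp
qed

lemma V_cont:
  fixes P :: "real \<Rightarrow> real"
  assumes "continuous_on {0..} P"
  shows "continuous_on {0..b} (V P)"
proof -
  have "P integrable_on {0..b}"
    using assms by (intro integrable_continuous_real) (auto intro: continuous_on_subset)
  from indefinite_integral_continuous_1[OF this] show ?thesis unfolding V_def by simp
qed

lemma telescope_bound:
  fixes X K :: real
  assumes "\<And>n::nat. n \<ge> 1 \<Longrightarrow> X \<le> K / real n"
  shows "X \<le> 0"
proof (rule ccontr)
  assume "\<not> X \<le> 0"
  then have X: "X > 0" by simp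
  obtain n :: nat where n: "real n > K / X" "n \<ge> 1"
    using reals_Archimedean2[of "max (K/X) 1"] by (metis max.strict_boundedE of_nat_1 of_nat_le_iff less_imp_le less_le_not_le nat_le_real_less not_le)
  have "K / real n < X" using n X by (simp add: field_simps divide_less_eq)
  then show False using assms[OF n(2)] by simp
qed

lemma fr_cases:
  assumes "floor_randomized P c tlo thi qbar r q u" "\<theta> \<in> {tlo..thi}"
  shows "(qhat P c \<le> q \<theta> \<and> r \<theta> = 1) \<or> (q \<theta> = qhat P c \<and> 0 < r \<theta> \<and> r \<theta> < 1) \<or> (q \<theta> = 0 \<and> r \<theta> = 0)"
proof -
  from assms(1) obtain T1 T01 T0 where
    U: "T1 \<union> T01 \<union> T0 = {tlo..thi}" and
    c1: "\<forall>\<theta>\<in>T1. q \<theta> \<ge> qhat P c \<and> r \<theta> = 1" and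
    c2: "\<forall>\<theta>\<in>T01. q \<theta> = qhat P c \<and> 0 < r \<theta> \<and> r \<theta> < 1" and
    c3: "\<forall>\<theta>\<in>T0. q \<theta> = 0 \<and> r \<theta> = 0"
    unfolding floor_randomized_def by blast
  from assms(2) U have "\<theta> \<in> T1 \<or> \<theta> \<in> T01 \<or> \<theta> \<in> T0" by blast
  then show ?thesis using c1 c2 c3 by blast
qed

lemma ic_bounds:
  assumes "IC tlo thi r q u" "s \<in> {tlo..thi}" "t \<in> {tlo..thi}" "s \<le> t"
  shows "q t * r t * (t - s) \<le> u s - u t \<and> u s - u t \<le> q s * r s * (t - s)"
proof -
  have "u s \<ge> u t + (t - s) * q t * r t" "u t \<ge> u s + (s - t) * q s * r s"
    using assms unfolding IC_def by blast+
  then show ?thesis by (simp add: algebra_simps)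
qed

lemma key:
  assumes ic1: "IC tlo thi r q u" and ic2: "IC tlo thi rt qt ut"
    and st: "tlo \<le> s" "s \<le> t" "t \<le> thi"
    and hyp: "\<forall>x\<in>{s<..t}. qt x * rt x - q x * r x \<ge> \<eta>"
  shows "(u s - ut s) - (u t - ut t) \<le> - \<eta> * (t - s)"
proof (cases "s = t")
  case True then show ?thesis by simp
next
  case False
  with st have st': "s < t" by simp
  let ?w = "\<lambda>x. u x - ut x"
  let ?Q = "\<lambda>x. q x * r x"
  have "(u s - ut s) - (u t - ut t) + \<eta> * (t - s) \<le> 0"
  proof (rule telescope_bound[where K = "(?Q s - ?Q t) * (t - s)"])
    fix n :: nat assume n: "n \<ge> 1"
    define h where "h = (t - s) / real n"
    define x where "x i = s + real i * h" for i :: nat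
    have hpos: "h > 0" using n st' unfolding h_def by simp
    have xn: "x n = t" "x 0 = s" using n unfolding x_def h_def by auto
    have xin: "x i \<in> {s..t}" if "i \<le> n" for i
    proof -
      have "real i * h \<le> real n * h" using that hpos by (simp add: mult_right_mono)
      also have "real n * h = t - s" using n unfolding h_def by simp
      finally show ?thesis unfolding x_def using hpos by simp
    qed
    have step: "?w (x i) - ?w (x (Suc i)) \<le> (?Q (x i) - ?Q (x (Suc i))) * h - \<eta> * h" if i: "i < n" for i
    proof -
      have a: "x i \<in> {tlo..thi}" "x (Suc i) \<in> {tlo..thi}" using xin[of i] xin[of "Suc i"] i st by auto
      have d: "x (Suc i) - x i = h" unfolding x_def by (simp add: algebra_simps)
      have le: "x i \<le> x (Suc i)" using d hpos by simp
      have gt: "x (Suc i) \<in> {s<..t}" using xin[of "Suc i"] i hpos unfolding x_def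
        by (auto simp: add_pos_pos)
      from ic_bounds[OF ic1 a le] d have b1: "u (x i) - u (x (Suc i)) \<le> ?Q (x i) * h" by simp
      from ic_bounds[OF ic2 a le] d have b2: "qt (x (Suc i)) * rt (x (Suc i)) * h \<le> ut (x i) - ut (x (Suc i))" by simp
      have "(?Q (x (Suc i)) + \<eta>) * h \<le> qt (x (Suc i)) * rt (x (Suc i)) * h"
        using hyp[rule_format, OF gt] hpos by (intro mult_right_mono) auto
      with b1 b2 show ?thesis by (simp add: algebra_simps)
    qed
    have "(\<Sum>i<n. ?w (x i) - ?w (x (Suc i))) \<le> (\<Sum>i<n. (?Q (x i) - ?Q (x (Suc i))) * h - \<eta> * h)"
      by (rule sum_mono) (use step in auto)
    also have "\<dots> = (\<Sum>i<n. (?Q (x i) - ?Q (x (Suc i)))) * h - real n * \<eta> * h"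
      by (subst sum_subtractf) (simp add: sum_distrib_right[symmetric])
    also have "(\<Sum>i<n. (?Q (x i) - ?Q (x (Suc i)))) = ?Q s - ?Q t"
      using sum_lessThan_telescope'[of "\<lambda>i. ?Q (x i)" n] xn by simp
    finally have "(\<Sum>i<n. ?w (x i) - ?w (x (Suc i))) \<le> (?Q s - ?Q t) * h - real n * \<eta> * h" .
    moreover have "(\<Sum>i<n. ?w (x i) - ?w (x (Suc i))) = ?w s - ?w t"
      using sum_lessThan_telescope'[of "\<lambda>i. ?w (x i)" n] xn by simp
    moreover have "real n * \<eta> * h = \<eta> * (t - s)" using n unfolding h_def by simp
    moreover have "(?Q s - ?Q t) * h = (?Q s - ?Q t) * (t - s) / real n" unfolding h_def by simp
    ultimately show "(u s - ut s) - (u t - ut t) + \<eta> * (t - s) \<le> (?Q s - ?Q t) * (t - s) / real n"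
      by linarith
  qed
  then show ?thesis by simp
qed

lemma qe_props:
  fixes P :: "real \<Rightarrow> real"
  assumes "continuous_on {0..} P" "\<forall>x\<in>{0..}. \<forall>y\<in>{0..}. x < y \<longrightarrow> P y < P x"
    "P qbar = 0" "qbar > 0" "0 < \<theta>" "\<theta> < P 0"
  shows "qe P \<theta> \<ge> 0 \<and> P (qe P \<theta>) = \<theta>"
proof -
  have "continuous_on {0..qbar} P" using assms(1) by (rule continuous_on_subset) auto
  then obtain z where z: "0 \<le> z" "z \<le> qbar" "P z = \<theta>"
    using IVT2'[of P qbar \<theta> 0] assms by auto
  have "qe P \<theta> = z" unfolding qe_def
  proof (rule the_equality)
    show "0 \<le> z \<and> P z = \<theta>" using z by simp
    fix y assume y: "0 \<le> y \<and> P y = \<theta>"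
    show "y = z"
    proof (rule ccontr)
      assume "y \<noteq> z"
      then have "y < z \<or> z < y" by auto
      then show False using assms(2) y z by force
    qed
  qed
  then show ?thesis using z by simp
qed

lemma g_strict:
  fixes P :: "real \<Rightarrow> real"
  assumes "continuous_on {0..} P" "\<forall>x\<in>{0..}. \<forall>y\<in>{0..}. x < y \<longrightarrow> P y < P x"
    "0 < a" "a < b"
  shows "V P a - a * P a < V P b - b * P b"
proof -
  have "V P b - V P a = integral {a..b} P" using V_diff[of a b P] assms by simp
  moreover have "P b * (b - a) \<le> integral {a..b} P"
  proof (rule int_lower)
    show "continuous_on {a..b} P" using assms(1) by (rule continuous_on_subset) (use assms in auto)
    show "\<forall>z\<in>{a..b}. P b \<le> P z"
    proof
      fix z assume "z \<in> {a..b}"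
      then show "P b \<le> P z" using assms(2,3) by (cases "z = b") (auto simp: less_eq_real_def)
    qed
  qed (use assms in simp)
  moreover have "P b < P a" using assms by auto
  ultimately have "V P b - V P a \<ge> P b * (b - a)" "a * P b < a * P a" using assms by auto
  then show ?thesis by (simp add: algebra_simps)
qed

lemma qhat_props:
  fixes P :: "real \<Rightarrow> real"
  assumes "continuous_on {0..} P" "\<forall>x\<in>{0..}. \<forall>y\<in>{0..}. x < y \<longrightarrow> P y < P x"
    "P qbar = 0" "qbar > 0" "0 < thi" "thi < P 0" "TS P c thi (qe P thi) > 0" "c > 0"
  shows "qhat P c > 0 \<and> V P (qhat P c) - qhat P c * P (qhat P c) = c"
proof -
  define z where "z = qe P thi"
  have z: "z \<ge> 0" "P z = thi" using qe_props[OF assms(1-4,5,6)] unfolding z_def by auto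
  have "z \<noteq> 0" using z assms(6) by auto
  then have "V P z - c - thi * z > 0" using assms(7) unfolding TS_def z_def[symmetric] by simp
  then have gz: "V P z - z * P z \<ge> c" using z by (simp add: algebra_simps)
  have g0: "V P 0 - 0 * P 0 = 0" unfolding V_def by simp
  have cont: "continuous_on {0..z} (\<lambda>q. V P q - q * P q)"
    using V_cont[OF assms(1), of z] assms(1)
    by (intro continuous_intros) (auto intro: continuous_on_subset)
  obtain q0 where q0: "0 \<le> q0" "q0 \<le> z" "V P q0 - q0 * P q0 = c"
    using IVT'[of "\<lambda>q. V P q - q * P q" 0 c z, OF _ gz z(1) cont] g0 assms(8) by auto
  have q0pos: "q0 > 0" using q0 g0 assms(8) by (cases "q0 = 0") auto
  have "qhat P c = q0" unfolding qhat_def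
  proof (rule the_equality)
    show "q0 > 0 \<and> V P q0 - q0 * P q0 = c" using q0 q0pos by simp
    fix y assume y: "y > 0 \<and> V P y - y * P y = c"
    show "y = q0"
    proof (rule ccontr)
      assume "y \<noteq> q0"
      then have "y < q0 \<or> q0 < y" by auto
      then show False using g_strict[OF assms(1,2)] y q0 q0pos by force
    qed
  qed
  then show ?thesis using q0 q0pos by simp
qed

theorem lemma8:
  fixes tlo thi c qbar \<alpha> :: real and P :: "real \<Rightarrow> real"
    and r q u rt qt ut :: "real \<Rightarrow> real"
  assumes "0 < tlo" "tlo < thi" "c > 0" "qbar > 0"
    and "continuous_on {0..} P"
    and "\<forall>x\<in>{0..}. \<forall>y\<in>{0..}. x < y \<longrightarrow> P y < P x"
    and "P qbar = 0"
    and "thi < P 0"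
    and "TS P c thi (qe P thi) > 0"
    and "0 \<le> \<alpha>" "\<alpha> < 1"
    and "floor_randomized P c tlo thi qbar r q u"
    and "left_continuous tlo thi r q" "DD P tlo thi q"
    and "floor_randomized P c tlo thi qbar rt qt ut"
    and "left_continuous tlo thi rt qt" "DD P tlo thi qt"
    and "dominates P c \<alpha> tlo thi qbar rt qt ut r q u"
  shows "\<forall>\<theta>\<in>{\<theta>\<in>{tlo..thi}. qt \<theta> * rt \<theta> > q \<theta> * r \<theta>}. u \<theta> > ut \<theta>"
proof
  fix \<theta>0 assume "\<theta>0 \<in> {\<theta>\<in>{tlo..thi}. qt \<theta> * rt \<theta> > q \<theta> * r \<theta>}"
  then have t0: "tlo \<le> \<theta>0" "\<theta>0 \<le> thi" and D0: "qt \<theta>0 * rt \<theta>0 > q \<theta>0 * r \<theta>0" by auto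
  define qh where "qh = qhat P c"
  have frM: "floor_randomized P c tlo thi qbar r q u" and frT: "floor_randomized P c tlo thi qbar rt qt ut"
    using assms by auto
  have mechM: "mechanism tlo thi qbar r q u" and icM: "IC tlo thi r q u" and uthi: "u thi = 0"
    using frM unfolding floor_randomized_def by auto
  have mechT: "mechanism tlo thi qbar rt qt ut" and icT: "IC tlo thi rt qt ut" and utthi: "ut thi = 0"
    using frT unfolding floor_randomized_def by auto
  have bM: "\<And>x. x \<in> {tlo..thi} \<Longrightarrow> 0 \<le> r x \<and> r x \<le> 1 \<and> 0 \<le> q x \<and> q x \<le> qbar"
    using mechM unfolding mechanism_def by auto
  have bT: "\<And>x. x \<in> {tlo..thi} \<Longrightarrow> 0 \<le> rt x \<and> rt x \<le> 1 \<and> 0 \<le> qt x \<and> qt x \<le> qbar"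
    using mechT unfolding mechanism_def by auto
  have dom1: "\<And>x. x \<in> {tlo..thi} \<Longrightarrow> RS P c \<alpha> x rt qt ut \<ge> RS P c \<alpha> x r q u"
    and dom2: "\<exists>x\<in>{tlo..thi}. RS P c \<alpha> x rt qt ut > RS P c \<alpha> x r q u"
    using assms(18) unfolding dominates_def by auto
  have qeP: "\<And>x. x \<in> {tlo..thi} \<Longrightarrow> qe P x \<ge> 0 \<and> P (qe P x) = x"
    using qe_props[OF assms(5,6,7,4)] assms(1,2,8) by force
  have qh: "qh > 0" "V P qh - qh * P qh = c"
    using qhat_props[OF assms(5,6,7,4) _ assms(8,9,3)] assms(1,2) unfolding qh_def by auto
  have Pdec: "\<And>x y. 0 \<le> x \<Longrightarrow> x < y \<Longrightarrow> P y < P x" using assms(6) by auto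
  have Pge: "\<And>x z. x \<in> {tlo..thi} \<Longrightarrow> 0 \<le> z \<Longrightarrow> z \<le> qe P x \<Longrightarrow> x \<le> P z"
  proof -
    fix x z assume x: "x \<in> {tlo..thi}" and z: "0 \<le> z" "z \<le> qe P x"
    show "x \<le> P z"
    proof (cases "z = qe P x")
      case True then show ?thesis using qeP[OF x] by simp
    next
      case False then show ?thesis using Pdec[of z "qe P x"] z qeP[OF x] by simp
    qed
  qed
  have TSmono: "\<And>x a b. x \<in> {tlo..thi} \<Longrightarrow> qh \<le> a \<Longrightarrow> a \<le> b \<Longrightarrow> b \<le> qe P x \<Longrightarrow> TS P c x a \<le> TS P c x b"
  proof -
    fix x a b assume x: "x \<in> {tlo..thi}" and ab: "qh \<le> a" "a \<le> b" "b \<le> qe P x"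
    have a0: "a > 0" "b > 0" using ab qh by auto
    have "V P b - V P a = integral {a..b} P" using V_diff[of a b P] a0 ab assms(5) by simp
    moreover have "x * (b - a) \<le> integral {a..b} P"
    proof (rule int_lower)
      show "continuous_on {a..b} P" using assms(5) by (rule continuous_on_subset) (use a0 in auto)
      show "\<forall>z\<in>{a..b}. x \<le> P z" using Pge[OF x] a0 ab by auto
    qed (use ab in simp)
    ultimately show "TS P c x a \<le> TS P c x b" using a0 unfolding TS_def by (simp add: algebra_simps)
  qed
  have TSqh: "\<And>x. x \<in> {tlo..thi} \<Longrightarrow> qh \<le> qe P x \<Longrightarrow> 0 \<le> TS P c x qh"
  proof -
    fix x assume x: "x \<in> {tlo..thi}" and le: "qh \<le> qe P x"
    have "TS P c x qh = qh * (P qh - x)" using qh unfolding TS_def by (simp add: algebra_simps)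
    moreover have "x \<le> P qh" using Pge[OF x _ le] qh by simp
    ultimately show "0 \<le> TS P c x qh" using qh by simp
  qed
  have cM: "\<And>x. x \<in> {tlo..thi} \<Longrightarrow> (qh \<le> q x \<and> r x = 1) \<or> (q x = qh \<and> 0 < r x \<and> r x < 1) \<or> (q x = 0 \<and> r x = 0)"
    using fr_cases[OF frM] unfolding qh_def by blast
  have cT: "\<And>x. x \<in> {tlo..thi} \<Longrightarrow> (qh \<le> qt x \<and> rt x = 1) \<or> (qt x = qh \<and> 0 < rt x \<and> rt x < 1) \<or> (qt x = 0 \<and> rt x = 0)"
    using fr_cases[OF frT] unfolding qh_def by blast
  have DDM: "\<And>x. x \<in> {tlo..thi} \<Longrightarrow> q x \<le> qe P x" "q tlo = qe P tlo"
    using assms(14) unfolding DD_def by auto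
  have DDT: "\<And>x. x \<in> {tlo..thi} \<Longrightarrow> qt x \<le> qe P x" "qt tlo = qe P tlo"
    using assms(17) unfolding DD_def by auto

  have step1: "\<And>x. x \<in> {tlo..thi} \<Longrightarrow> q x * r x > qt x * rt x \<Longrightarrow> u x \<ge> ut x"
  proof -
    fix x assume x: "x \<in> {tlo..thi}" and E: "q x * r x > qt x * rt x"
    have Qt0: "0 \<le> qt x * rt x" using bT[OF x] by simp
    have geTS: "rt x * TS P c x (qt x) \<le> r x * TS P c x (q x)"
    proof -
      have notT0: "\<not> (q x = 0 \<and> r x = 0)" using E Qt0 by auto
      have qq: "qh \<le> q x" "q x \<le> qe P x" using cM[OF x] notT0 DDM(1)[OF x] by auto
      have S0: "0 \<le> TS P c x qh" using TSqh[OF x] qq by simp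
      have S1: "TS P c x qh \<le> TS P c x (q x)" using TSmono[OF x _ qq(1) qq(2)] by simp
      consider "qh \<le> q x \<and> r x = 1" | "q x = qh \<and> 0 < r x \<and> r x < 1"
        using cM[OF x] notT0 by blast
      then show ?thesis
      proof cases
        case 1
        consider "qh \<le> qt x \<and> rt x = 1" | "qt x = qh \<and> 0 < rt x \<and> rt x < 1" | "qt x = 0 \<and> rt x = 0"
          using cT[OF x] by blast
        then show ?thesis
        proof cases
          case a: 1
          then have "qt x < q x" using E 1 by simp
          then show ?thesis using TSmono[OF x, of "qt x" "q x"] a 1 qq by simp
        next
          case a: 2
          have "rt x * TS P c x qh \<le> TS P c x qh" using a S0 by (simp add: mult_left_le_one_le)
          then show ?thesis using a 1 S1 by simp
        next
          case a: 3
          then show ?thesis using 1 S0 S1 by simp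
        qed
      next
        case 2
        consider "qh \<le> qt x \<and> rt x = 1" | "qt x = qh \<and> 0 < rt x \<and> rt x < 1" | "qt x = 0 \<and> rt x = 0"
          using cT[OF x] by blast
        then show ?thesis
        proof cases
          case a: 1
          have "qh * r x < qh" using 2 qh by simp
          then show ?thesis using a 2 E by simp
        next
          case a: 2
          then have "rt x < r x" using E 2 qh by simp
          then show ?thesis using a 2 S0 by (simp add: mult_right_mono)
        next
          case a: 3
          then show ?thesis using 2 S0 by simp
        qed
      qed
    qed
    have "RS P c \<alpha> x rt qt ut \<ge> RS P c \<alpha> x r q u" using dom1[OF x] .
    then have "(1 - \<alpha>) * (u x - ut x) \<ge> r x * TS P c x (q x) - rt x * TS P c x (qt x)"
      unfolding RS_def by (simp add: algebra_simps)
    with geTS have "(1 - \<alpha>) * (u x - ut x) \<ge> 0" by linarith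
    then show "u x \<ge> ut x" using assms(11) by (simp add: zero_le_mult_iff)
  qed
  have Qle: "\<And>x. x \<in> {tlo..thi} \<Longrightarrow> q x * r x \<le> qbar"
  proof -
    fix x assume x: "x \<in> {tlo..thi}"
    have "q x * r x \<le> q x" using bM[OF x] by (simp add: mult_left_le)
    then show "q x * r x \<le> qbar" using bM[OF x] by simp
  qed
  have Q0: "\<And>x. x \<in> {tlo..thi} \<Longrightarrow> 0 \<le> qt x * rt x \<and> 0 \<le> q x * r x"
    using bM bT by auto
  define \<eta> where "\<eta> = (qt \<theta>0 * rt \<theta>0 - q \<theta>0 * r \<theta>0) / 2"
  have eta: "\<eta> > 0" using D0 unfolding \<eta>_def by simp
  have lc: "\<exists>b<\<theta>0. \<forall>y. b < y \<and> y < \<theta>0 \<longrightarrow> \<eta> < qt y * rt y - q y * r y" if lt: "tlo < \<theta>0"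
  proof -
    have "continuous (at_left \<theta>0) (\<lambda>t. qt t * rt t)" "continuous (at_left \<theta>0) (\<lambda>t. q t * r t)"
      using assms(13,16) lt t0 unfolding left_continuous_def by auto
    then have "continuous (at_left \<theta>0) (\<lambda>t. qt t * rt t - q t * r t)" by (rule continuous_diff)
    then have "((\<lambda>t. qt t * rt t - q t * r t) \<longlongrightarrow> qt \<theta>0 * rt \<theta>0 - q \<theta>0 * r \<theta>0) (at_left \<theta>0)"
      by (simp add: continuous_within)
    moreover have "\<eta> < qt \<theta>0 * rt \<theta>0 - q \<theta>0 * r \<theta>0" using eta unfolding \<eta>_def by simp
    ultimately have "eventually (\<lambda>t. \<eta> < qt t * rt t - q t * r t) (at_left \<theta>0)" by (rule order_tendstoD(1))
    then show ?thesis unfolding eventually_at_left_field by blast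
  qed
  have zero_at_tlo: "uu tlo = 0"
    if ic: "IC tlo thi rr qq uu" and z: "\<forall>x\<in>{tlo<..thi}. uu x = 0 \<and> qq x * rr x = 0" for rr qq uu
  proof -
    have I: "tlo \<in> {tlo..thi}" "thi \<in> {tlo..thi}" using assms(2) by auto
    have "uu tlo \<ge> 0" using ic_bounds[OF ic I] z assms(2) by auto
    moreover have "uu tlo \<le> 0"
    proof (rule telescope_bound[where K = "qq tlo * rr tlo * (thi - tlo)"])
      fix n :: nat assume n: "n \<ge> 1"
      define t where "t = tlo + (thi - tlo) / real n"
      have "(thi - tlo) / real n \<le> (thi - tlo)" using n assms(2) by (simp add: divide_le_eq)
      moreover have "(thi - tlo) / real n > 0" using n assms(2) by simp
      ultimately have tI: "t \<in> {tlo..thi}" "tlo < t" unfolding t_def by auto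
      have "uu tlo - uu t \<le> qq tlo * rr tlo * (t - tlo)" using ic_bounds[OF ic I(1) tI(1)] tI by simp
      then show "uu tlo \<le> qq tlo * rr tlo * (thi - tlo) / real n" using z tI unfolding t_def by auto
    qed
    ultimately show ?thesis by simp
  qed
  define E where "E = {x\<in>{tlo..\<theta>0}. q x * r x > qt x * rt x}"
  have base: "\<exists>e. tlo \<le> e \<and> e < \<theta>0 \<and> ut e \<le> u e \<and> (\<forall>x\<in>{e<..\<theta>0}. q x * r x \<le> qt x * rt x)"
  proof (cases "E = {}")
    case False
    define e where "e = Sup E"
    have bdd: "bdd_above E" unfolding E_def by (rule bdd_aboveI[of _ \<theta>0]) auto
    obtain x1 where x1: "x1 \<in> E" using False by auto
    have x1lt: "x1 < \<theta>0" "tlo \<le> x1" using x1 D0 unfolding E_def by (auto simp: less_eq_real_def)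
    have tle: "tlo \<le> e" using cSup_upper[OF x1 bdd] x1lt unfolding e_def by auto
    have eleq: "e \<le> \<theta>0" unfolding e_def by (rule cSup_least[OF False]) (auto simp: E_def)
    have above: "\<forall>x\<in>{e<..\<theta>0}. q x * r x \<le> qt x * rt x"
    proof
      fix x assume x: "x \<in> {e<..\<theta>0}"
      have "x \<notin> E" using cSup_upper[OF _ bdd, of x] x unfolding e_def by force
      moreover have "x \<in> {tlo..\<theta>0}" using x tle by auto
      ultimately show "q x * r x \<le> qt x * rt x" unfolding E_def by auto
    qed
    have elt: "e < \<theta>0"
    proof (rule ccontr)
      assume "\<not> e < \<theta>0" then have eq: "e = \<theta>0" using eleq by simp
      obtain b where b: "b < \<theta>0" "\<forall>y. b < y \<and> y < \<theta>0 \<longrightarrow> \<eta> < qt y * rt y - q y * r y"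
        using lc x1lt by force
      obtain y where y: "y \<in> E" "b < y" using less_cSupD[OF False, of b] b eq unfolding e_def by auto
      have "y \<le> \<theta>0" "y \<noteq> \<theta>0" using y D0 unfolding E_def by auto
      then have "\<eta> < qt y * rt y - q y * r y" using b y by auto
      then show False using y eta unfolding E_def by auto
    qed
    have we: "ut e \<le> u e"
    proof (rule ccontr)
      assume neg: "\<not> ut e \<le> u e"
      define \<epsilon> where "\<epsilon> = (ut e - u e) / qbar"
      have epos: "\<epsilon> > 0" using neg assms(4) unfolding \<epsilon>_def by simp
      obtain x where x: "x \<in> E" "e - \<epsilon> < x"
        using less_cSupD[OF False, of "e - \<epsilon>"] epos unfolding e_def by auto
      have xe: "x \<le> e" using cSup_upper[OF x(1) bdd] unfolding e_def .
      have xI: "x \<in> {tlo..thi}" "e \<in> {tlo..thi}" using x(1) tle eleq t0 unfolding E_def by auto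
      have w0: "ut x \<le> u x" using step1 xI x(1) unfolding E_def by auto
      have b1: "u x - u e \<le> q x * r x * (e - x)" using ic_bounds[OF icM xI xe] by simp
      have b2: "qt e * rt e * (e - x) \<le> ut x - ut e" using ic_bounds[OF icT xI xe] by simp
      have b3: "qt e * rt e * (e - x) \<ge> 0" using Q0[OF xI(2)] xe by simp
      have b4: "q x * r x * (e - x) \<le> qbar * (e - x)" using Qle[OF xI(1)] xe by (intro mult_right_mono) auto
      have b5: "qbar * (e - x) < qbar * \<epsilon>" using x(2) assms(4) by simp
      have b6: "qbar * \<epsilon> = ut e - u e" unfolding \<epsilon>_def using assms(4) by simp
      from w0 b1 b2 b3 b4 b5 b6 show False by linarith
    qed
    show ?thesis using tle elt we above by blast
  next
    case True
    then have allge: "\<forall>x\<in>{tlo..\<theta>0}. q x * r x \<le> qt x * rt x" unfolding E_def by auto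
    have tI: "tlo \<in> {tlo..thi}" using assms(2) by auto
    have qetlo: "qe P tlo > 0"
    proof -
      have "qe P tlo \<ge> 0" "P (qe P tlo) = tlo" using qeP[OF tI] by auto
      moreover have "qe P tlo \<noteq> 0" using calculation assms(2,8) by auto
      ultimately show ?thesis by simp
    qed
    show ?thesis
    proof (cases "rt tlo = r tlo")
      case True
      have "RS P c \<alpha> tlo rt qt ut \<ge> RS P c \<alpha> tlo r q u" using dom1[OF tI] .
      then have "(1 - \<alpha>) * ut tlo \<le> (1 - \<alpha>) * u tlo"
        unfolding RS_def using True DDM(2) DDT(2) by simp
      then have w: "ut tlo \<le> u tlo" using assms(11) by simp
      have "tlo \<noteq> \<theta>0" using D0 True DDM(2) DDT(2) by auto
      then have "tlo < \<theta>0" using t0 by simp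
      then show ?thesis using w allge by (intro exI[of _ tlo]) auto
    next
      case False
      have "q tlo * r tlo \<le> qt tlo * rt tlo" using allge t0 by auto
      then have "r tlo \<le> rt tlo" using DDM(2) DDT(2) qetlo by simp
      then have rlt: "r tlo < rt tlo" using False by simp
      then have "r tlo < 1" using bT[OF tI] by simp
      then have qtlo: "q tlo = qh" using cM[OF tI] qetlo DDM(2) by auto
      have qtlo': "qt tlo = qh" using DDM(2) DDT(2) qtlo by simp
      have above0: "q x = 0 \<and> r x = 0 \<and> qt x = 0 \<and> rt x = 0" if x: "x \<in> {tlo..thi}" "tlo < x" for x
      proof -
        have "qe P x < qe P tlo"
        proof (rule ccontr)
          assume "\<not> qe P x < qe P tlo"
          then have "qe P tlo \<le> qe P x" by simp
          then have "P (qe P x) \<le> P (qe P tlo)"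
            using Pdec[of "qe P tlo" "qe P x"] qeP[OF tI] by (cases "qe P tlo = qe P x") auto
          then show False using qeP[OF x(1)] qeP[OF tI] x by simp
        qed
        then have "q x < qh" "qt x < qh" using DDM(1)[OF x(1)] DDT(1)[OF x(1)] qtlo DDM(2) by auto
        then show ?thesis using cM[OF x(1)] cT[OF x(1)] by auto
      qed
      have u0: "u x = 0 \<and> ut x = 0" if x: "x \<in> {tlo..thi}" "tlo < x" for x
      proof -
        have I2: "thi \<in> {tlo..thi}" using assms(2) by auto
        have xle: "x \<le> thi" using x by auto
        have "q thi * r thi * (thi - x) \<le> u x - u thi \<and> u x - u thi \<le> q x * r x * (thi - x)"
          using ic_bounds[OF icM x(1) I2 xle] .
        moreover have "qt thi * rt thi * (thi - x) \<le> ut x - ut thi \<and> ut x - ut thi \<le> qt x * rt x * (thi - x)"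
          using ic_bounds[OF icT x(1) I2 xle] .
        ultimately show ?thesis using above0[OF x] above0[OF I2] x uthi utthi by auto
      qed
      have ut0: "u tlo = 0" by (rule zero_at_tlo[OF icM]) (use u0 above0 in auto)
      have utt0: "ut tlo = 0" by (rule zero_at_tlo[OF icT]) (use u0 above0 in auto)
      have TS0: "TS P c tlo qh = 0"
      proof -
        have "TS P c tlo qh = qh * (P qh - tlo)" using qh unfolding TS_def by (simp add: algebra_simps)
        moreover have "P qh = tlo" using qeP[OF tI] qtlo DDM(2) by simp
        ultimately show ?thesis by simp
      qed
      have "RS P c \<alpha> x rt qt ut = RS P c \<alpha> x r q u" if x: "x \<in> {tlo..thi}" for x
      proof (cases "x = tlo")
        case True
        then show ?thesis unfolding RS_def using qtlo qtlo' TS0 ut0 utt0 by simp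
      next
        case False
        then have "tlo < x" using x by auto
        then show ?thesis unfolding RS_def using above0[OF x] u0[OF x] by simp
      qed
      then show ?thesis using dom2 by auto
    qed
  qed
  then obtain e where e: "tlo \<le> e" "e < \<theta>0" "ut e \<le> u e" "\<forall>x\<in>{e<..\<theta>0}. q x * r x \<le> qt x * rt x"
    by blast
  obtain b where b: "b < \<theta>0" "\<forall>y. b < y \<and> y < \<theta>0 \<longrightarrow> \<eta> < qt y * rt y - q y * r y"
    using lc e by force
  define m where "m = max e b"
  have m: "e \<le> m" "m < \<theta>0" "tlo \<le> m" "b \<le> m" using e b unfolding m_def by auto
  have k1: "(u e - ut e) - (u m - ut m) \<le> - 0 * (m - e)"
    by (rule key[OF icM icT]) (use e m t0 in auto)
  have k2: "(u m - ut m) - (u \<theta>0 - ut \<theta>0) \<le> - \<eta> * (\<theta>0 - m)"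
  proof (rule key[OF icM icT])
    show "\<forall>x\<in>{m<..\<theta>0}. \<eta> \<le> qt x * rt x - q x * r x"
    proof
      fix x assume x: "x \<in> {m<..\<theta>0}"
      show "\<eta> \<le> qt x * rt x - q x * r x"
      proof (cases "x = \<theta>0")
        case True then show ?thesis using eta unfolding \<eta>_def by simp
      next
        case False
        then have "b < x \<and> x < \<theta>0" using x m by auto
        then show ?thesis using b(2) by (meson less_imp_le)
      qed
    qed
  qed (use m t0 in auto)
  have "\<eta> * (\<theta>0 - m) > 0" using eta m by simp
  then show "u \<theta>0 > ut \<theta>0" using k1 k2 e by linarith
qed
end
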